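(* Let $m\mid n$ with $n\ge 3$. Let $A(Y_0,\dots,Y_{m-1})\in\mathbb C[Y_0,\dots,Y_{m-1}]$ be such that for every $\sigma\in S_m$, $A(Y_{\sigma(0)},\dots,Y_{\sigma(m-1)})=\pm A(Y_0,\dots,Y_{m-1})$. Let $B(Z_0,\dots,Z_{n/m-1})\in\mathbb C[Z_0,\dots,Z_{n/m-1}]$ be symmetric, let $B_i=B(X_i,X_{i+m},\dots,X_{i+(n/m-1)m})$ for $0\le i\le m-1$, and let $F=A(B_0,\dots,B_{m-1})\in\mathbb C[X_0,\dots,X_{n-1}]$. Assume $\deg_{X_0}F(X_0,0,\dots,0)>0$. Then $\prod_{\phi\in\mathcal E_{n,m}}\phi(F)\in\mathbb C[X_0,\dots,X_{n-1}]$ is symmetric in $X_0,\dots,X_{n-1}$.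
   Context: The symmetric group $S_n$ of permutations of $\{0,1,\dots,n-1\}$ (identified with $\mathbb Z/n\mathbb Z$) acts on $\mathbb C[X_0,\dots,X_{n-1}]$ by permuting indices of the indeterminates. Partition $\{0,\dots,n-1\}$ into blocks $I_i=\{i+mj:0\le j\le n/m-1\}$, $0\le i\le m-1$. Let $\mathcal P_{n,m}$ be the set of all unordered partitions of $\{0,1,\dots,n-1\}$ into $m$ parts of size $n/m$. For each $\{P_0,\dots,P_{m-1}\}\in\mathcal P_{n,m}$ choose a permutation $\phi_{\{P_0,\dots,P_{m-1}\}}\in S_n$ mapping $I_i$ onto $P_i$ for $0\le i\le m-1$, and let $\mathcal E_{n,m}=\{\phi_{\{P_0,\dots,P_{m-1}\}}:\{P_0,\dots,P_{m-1}\}\in\mathcal P_{n,m}\}$; this is a left transversal in $S_n$ of the wreath product $S_m\wr S_{n/m}$, the subgroup of permutations that permute the blocks $I_i$ among themselves and permute elements within blocks. *)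

theory Defs
  imports "HOL-Library.Poly_Mapping" "HOL-Combinatorics.Permutations" "HOL-Library.Disjoint_Sets"
    Complex_Main
begin

text \<open>Multivariate polynomials over the complex numbers in indeterminates X_0, X_1, ...:
  a polynomial is a finitely supported map from monomials (finitely supported exponent
  vectors nat =>0 nat) to coefficients.\<close>

type_synonym mpoly = "(nat \<Rightarrow>\<^sub>0 nat) \<Rightarrow>\<^sub>0 complex"

definition Var :: "nat \<Rightarrow> mpoly" where
  "Var i = Poly_Mapping.single (Poly_Mapping.single i 1) 1"

definition Const :: "complex \<Rightarrow> mpoly" where
  "Const c = Poly_Mapping.single 0 c"

definition in_vars :: "nat \<Rightarrow> mpoly \<Rightarrow> bool" where
  "in_vars k p \<longleftrightarrow> (\<forall>mon \<in> Poly_Mapping.keys p. Poly_Mapping.keys mon \<subseteq> {..<k})"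

definition subst :: "(nat \<Rightarrow> mpoly) \<Rightarrow> mpoly \<Rightarrow> mpoly" where
  "subst g p = (\<Sum>mon \<in> Poly_Mapping.keys p.
      Const (Poly_Mapping.lookup p mon) *
      (\<Prod>i \<in> Poly_Mapping.keys mon. g i ^ Poly_Mapping.lookup mon i))"

definition rename :: "(nat \<Rightarrow> nat) \<Rightarrow> mpoly \<Rightarrow> mpoly" where
  "rename \<sigma> p = subst (\<lambda>i. Var (\<sigma> i)) p"

definition symmetric_in :: "nat \<Rightarrow> mpoly \<Rightarrow> bool" where
  "symmetric_in k p \<longleftrightarrow> (\<forall>\<sigma>. \<sigma> permutes {..<k} \<longrightarrow> rename \<sigma> p = p)"

definition deg_var :: "nat \<Rightarrow> mpoly \<Rightarrow> nat" where
  "deg_var i p = Max (insert 0 ((\<lambda>mon. Poly_Mapping.lookup mon i) ` Poly_Mapping.keys p))"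

definition block :: "nat \<Rightarrow> nat \<Rightarrow> nat \<Rightarrow> nat set" where
  "block n m i = {i + m * j | j. j < n div m}"

definition partitions_nm :: "nat \<Rightarrow> nat \<Rightarrow> nat set set set" where
  "partitions_nm n m = {Q. partition_on {..<n} Q \<and> card Q = m \<and> (\<forall>P\<in>Q. card P = n div m)}"

text \<open>phi is a valid choice of transversal representatives: for each partition Q,
  phi Q is a permutation of {0..n-1} mapping the blocks I_0..I_{m-1} onto the parts of Q
  (in some labelling P_i = phi Q ` I_i).\<close>
definition transversal_choice :: "nat \<Rightarrow> nat \<Rightarrow> (nat set set \<Rightarrow> nat \<Rightarrow> nat) \<Rightarrow> bool" where
  "transversal_choice n m \<phi> \<longleftrightarrow>
     (\<forall>Q \<in> partitions_nm n m. \<phi> Q permutes {..<n} \<and>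
        (\<lambda>i. \<phi> Q ` block n m i) ` {..<m} = Q)"

end

theory Submission
  imports Defs
begin


definition M :: "(nat \<Rightarrow> mpoly) \<Rightarrow> (nat \<Rightarrow>\<^sub>0 nat) \<Rightarrow> mpoly" where
  "M g mon = (\<Prod>i \<in> Poly_Mapping.keys mon. g i ^ Poly_Mapping.lookup mon i)"

lemma subst_M: "subst g p = (\<Sum>mon \<in> Poly_Mapping.keys p. Const (Poly_Mapping.lookup p mon) * M g mon)"
  by (simp add: subst_def M_def)

lemma Const_0[simp]: "Const 0 = 0" by (simp add: Const_def)
lemma Const_1[simp]: "Const 1 = 1" by (simp add: Const_def)
lemma Const_add: "Const (a + b) = Const a + Const b" by (simp add: Const_def single_add)
lemma Const_mult: "Const (a * b) = Const a * Const b" by (simp add: Const_def mult_single)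

lemma subst_superset:
  assumes "finite S" "Poly_Mapping.keys p \<subseteq> S"
  shows "subst g p = (\<Sum>mon \<in> S. Const (Poly_Mapping.lookup p mon) * M g mon)"
  unfolding subst_M
  by (rule sum.mono_neutral_left) (use assms in \<open>auto simp: in_keys_iff\<close>)

lemma M_superset:
  assumes "finite S" "Poly_Mapping.keys mon \<subseteq> S"
  shows "M g mon = (\<Prod>i \<in> S. g i ^ Poly_Mapping.lookup mon i)"
  unfolding M_def
  by (rule prod.mono_neutral_left) (use assms in \<open>auto simp: in_keys_iff\<close>)

lemma M_add: "M g (a + b) = M g a * M g b"
proof -
  let ?S = "Poly_Mapping.keys a \<union> Poly_Mapping.keys b"
  have "M g (a + b) = (\<Prod>i \<in> ?S. g i ^ Poly_Mapping.lookup (a+b) i)"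
    by (rule M_superset) (auto simp: keys_add)
  also have "\<dots> = (\<Prod>i \<in> ?S. g i ^ Poly_Mapping.lookup a i) * (\<Prod>i \<in> ?S. g i ^ Poly_Mapping.lookup b i)"
    by (simp add: lookup_add power_add prod.distrib)
  also have "\<dots> = M g a * M g b"
    by (subst (1 2) M_superset[where S="?S"]) auto
  finally show ?thesis .
qed

lemma M_zero[simp]: "M g 0 = 1" by (simp add: M_def)

lemma subst_add: "subst g (p + q) = subst g p + subst g q"
proof -
  let ?S = "Poly_Mapping.keys p \<union> Poly_Mapping.keys q"
  have "subst g (p + q) = (\<Sum>mon \<in> ?S. Const (Poly_Mapping.lookup (p+q) mon) * M g mon)"
    by (rule subst_superset) (auto simp: keys_add)
  also have "\<dots> = (\<Sum>mon \<in> ?S. Const (Poly_Mapping.lookup p mon) * M g mon) + (\<Sum>mon \<in> ?S. Const (Poly_Mapping.lookup q mon) * M g mon)"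
    by (simp add: lookup_add Const_add distrib_right sum.distrib)
  also have "\<dots> = subst g p + subst g q"
    by (subst (1 2) subst_superset[where S="?S"]) auto
  finally show ?thesis .
qed

lemma subst_zero[simp]: "subst g 0 = 0" by (simp add: subst_def)

lemma subst_sum: "subst g (\<Sum>x\<in>A. f x) = (\<Sum>x\<in>A. subst g (f x))"
  by (induction A rule: infinite_finite_induct) (auto simp: subst_add)

lemma subst_single: "subst g (Poly_Mapping.single a c) = Const c * M g a"
  by (subst subst_superset[where S="{a}"]) auto

lemma expand: "p = (\<Sum>a\<in>Poly_Mapping.keys p. Poly_Mapping.single a (Poly_Mapping.lookup p a))"
proof (rule poly_mapping_eqI)
  fix k
  have "Poly_Mapping.lookup (\<Sum>a\<in>Poly_Mapping.keys p. Poly_Mapping.single a (Poly_Mapping.lookup p a)) k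
     = (\<Sum>a\<in>Poly_Mapping.keys p. Poly_Mapping.lookup (Poly_Mapping.single a (Poly_Mapping.lookup p a)) k)"
    by (simp add: lookup_sum)
  also have "\<dots> = Poly_Mapping.lookup p k"
    by (cases "k \<in> Poly_Mapping.keys p") (auto simp: lookup_single when_def in_keys_iff)
  finally show "Poly_Mapping.lookup p k = Poly_Mapping.lookup (\<Sum>a\<in>Poly_Mapping.keys p. Poly_Mapping.single a (Poly_Mapping.lookup p a)) k" by simp
qed

lemma subst_mult: "subst g (p * q) = subst g p * subst g q"
proof -
  have "p * q = (\<Sum>a\<in>Poly_Mapping.keys p. Poly_Mapping.single a (Poly_Mapping.lookup p a)) *
                (\<Sum>b\<in>Poly_Mapping.keys q. Poly_Mapping.single b (Poly_Mapping.lookup q b))"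
    by (subst (1) expand, subst (2) expand) (rule refl)
  also have "\<dots> = (\<Sum>a\<in>Poly_Mapping.keys p. \<Sum>b\<in>Poly_Mapping.keys q.
      Poly_Mapping.single (a + b) (Poly_Mapping.lookup p a * Poly_Mapping.lookup q b))"
    by (simp add: sum_product mult_single)
  finally have "subst g (p * q) = (\<Sum>a\<in>Poly_Mapping.keys p. \<Sum>b\<in>Poly_Mapping.keys q.
      (Const (Poly_Mapping.lookup p a) * M g a) * (Const (Poly_Mapping.lookup q b) * M g b))"
    by (simp add: subst_sum subst_single M_add Const_mult mult_ac)
  also have "\<dots> = subst g p * subst g q"
    by (simp add: subst_M sum_product)
  finally show ?thesis .
qed

lemma subst_one[simp]: "subst g 1 = 1"
  using subst_single[of g 0 1] by simp

lemma subst_uminus: "subst g (- p) = - subst g p"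
  using subst_add[of g "-p" p] by (simp add: eq_neg_iff_add_eq_0)

lemma subst_power: "subst g (p ^ k) = subst g p ^ k"
  by (induction k) (auto simp: subst_mult)

lemma subst_prod: "subst g (\<Prod>x\<in>A. f x) = (\<Prod>x\<in>A. subst g (f x))"
  by (induction A rule: infinite_finite_induct) (auto simp: subst_mult)

lemma subst_Var[simp]: "subst g (Var i) = g i"
  by (simp add: Var_def subst_single M_def)

lemma subst_Const[simp]: "subst g (Const c) = Const c"
  by (simp add: Const_def subst_single)

lemma subst_subst: "subst g (subst h p) = subst (\<lambda>i. subst g (h i)) p"
proof -
  have "subst g (subst h p) = (\<Sum>mon \<in> Poly_Mapping.keys p. subst g (Const (Poly_Mapping.lookup p mon) *
      (\<Prod>i \<in> Poly_Mapping.keys mon. h i ^ Poly_Mapping.lookup mon i)))"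
    unfolding subst_def[of h] by (rule subst_sum)
  also have "\<dots> = subst (\<lambda>i. subst g (h i)) p"
    unfolding subst_def[of "\<lambda>i. subst g (h i)"] by (simp add: subst_mult subst_prod subst_power)
  finally show ?thesis .
qed

lemma subst_cong:
  assumes "\<And>mon i. mon \<in> Poly_Mapping.keys p \<Longrightarrow> i \<in> Poly_Mapping.keys mon \<Longrightarrow> g i = g' i"
  shows "subst g p = subst g' p"
  unfolding subst_def using assms by (auto intro!: sum.cong prod.cong)

lemma subst_cong_in_vars:
  assumes "in_vars k p" "\<And>i. i < k \<Longrightarrow> g i = g' i"
  shows "subst g p = subst g' p"
  using assms unfolding in_vars_def by (intro subst_cong) auto

lemma rename_rename: "rename \<sigma> (rename \<tau> p) = rename (\<sigma> \<circ> \<tau>) p"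
  by (simp add: rename_def subst_subst)





lemma block_eq:
  assumes "0 < m" "m dvd n" "i < m"
  shows "block n m i = {y. y < n \<and> y mod m = i}"
proof (intro set_eqI iffI)
  fix y assume "y \<in> block n m i"
  then obtain j where j: "y = i + m * j" "j < n div m" by (auto simp: block_def)
  have "i + m * j < m * (j + 1)" using assms by simp
  also have "\<dots> \<le> m * (n div m)" using j by (intro mult_le_mono2) simp
  also have "\<dots> = n" using assms by simp
  finally show "y \<in> {y. y < n \<and> y mod m = i}" using j assms by simp
next
  fix y assume y: "y \<in> {y. y < n \<and> y mod m = i}"
  then have "y = i + m * (y div m)" using mod_mult_div_eq[of y m] by simp
  moreover have "y div m < n div m"
  proof -
    have "n div m * m = n" using assms by simp
    then show ?thesis using y assms by (simp add: div_less_iff_less_mult)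
  qed
  ultimately show "y \<in> block n m i" unfolding block_def by blast
qed

lemma lt_aux:
  fixes i j m k :: nat
  assumes "i < m" "j < k" shows "i + m * j < m * k"
proof -
  have "i + m * j < m * Suc j" using assms by simp
  also have "\<dots> \<le> m * k" using assms by (intro mult_le_mono2) simp
  finally show ?thesis .
qed

lemma endo_permutes:
  assumes "finite S" "\<And>x. x \<in> S \<Longrightarrow> f x \<in> S" "inj_on f S" "\<And>x. x \<notin> S \<Longrightarrow> f x = x"
  shows "f permutes S"
proof (rule bij_imp_permutes)
  have "f ` S = S" using assms by (intro endo_inj_surj) auto
  then show "bij_betw f S S" using assms by (simp add: bij_betw_def)
qed (use assms in auto)

lemma wreath:
  fixes n m k :: nat and A B :: mpoly and \<tau> :: "nat \<Rightarrow> nat"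
  assumes n0: "0 < n" and m0: "0 < m" and mn: "m dvd n" and kdef: "k = n div m"
    and inA: "in_vars m A"
    and sA: "\<forall>\<sigma>. \<sigma> permutes {..<m} \<longrightarrow> rename \<sigma> A = A \<or> rename \<sigma> A = - A"
    and inB: "in_vars k B" and sB: "symmetric_in k B"
    and tp: "\<tau> permutes {..<n}"
    and hyp: "\<And>x y. x < n \<Longrightarrow> y < n \<Longrightarrow> (x mod m = y mod m \<longleftrightarrow> \<tau> x mod m = \<tau> y mod m)"
  defines "F \<equiv> subst (\<lambda>i. subst (\<lambda>j. Var (i + m * j)) B) A"
  shows "rename \<tau> F = F \<or> rename \<tau> F = - F"
proof -
  have nmk: "n = m * k" using mn kdef by simp
  have mlen: "m \<le> n" using mn n0 by (simp add: dvd_imp_le)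
  define \<pi> where "\<pi> i = (if i < m then \<tau> i mod m else i)" for i
  define \<rho> where "\<rho> i j = (if j < k then \<tau> (i + m * j) div m else j)" for i j
  define Bi where "Bi i = subst (\<lambda>j. Var (i + m * j)) B" for i
  have tlt: "\<tau> x < n" if "x < n" for x
    using tp that by (meson lessThan_iff permutes_in_image)
  have tmod: "\<tau> x mod m = \<pi> (x mod m)" if "x < n" for x
  proof -
    have "x mod m < n" using that by (meson le_less_trans mod_le_divisor mod_less_eq_dividend m0)
    then have "\<tau> x mod m = \<tau> (x mod m) mod m" using hyp[OF that, of "x mod m"] by simp
    then show ?thesis using m0 by (simp add: \<pi>_def)
  qed
  have pip: "\<pi> permutes {..<m}"
  proof (rule endo_permutes)
    show "inj_on \<pi> {..<m}"
    proof (rule inj_onI)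
      fix i i' assume "i \<in> {..<m}" "i' \<in> {..<m}" "\<pi> i = \<pi> i'"
      then show "i = i'" using hyp[of i i'] mlen by (simp add: \<pi>_def)
    qed
  qed (auto simp: \<pi>_def m0)
  have dec: "\<tau> (i + m * j) = \<pi> i + m * \<rho> i j" if "i < m" "j < k" for i j
  proof -
    have x: "i + m * j < n" using lt_aux[OF that] nmk by simp
    have "\<tau> (i + m * j) mod m = \<pi> i" using tmod[OF x] that by simp
    moreover have "\<rho> i j = \<tau> (i + m * j) div m" using that by (simp add: \<rho>_def)
    ultimately show ?thesis by (metis mod_mult_div_eq)
  qed
  have rp: "\<rho> i permutes {..<k}" if "i < m" for i
  proof (rule endo_permutes)
    show "\<rho> i x \<in> {..<k}" if "x \<in> {..<k}" for x
    proof -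
      have "i + m * x < n" using lt_aux[OF \<open>i < m\<close>, of x k] that nmk by simp
      then have "\<tau> (i + m * x) < m * k" using tlt nmk by simp
      then show ?thesis using that m0 by (simp add: \<rho>_def div_less_iff_less_mult mult.commute)
    qed
    show "inj_on (\<rho> i) {..<k}"
    proof (rule inj_onI)
      fix j j' assume jj: "j \<in> {..<k}" "j' \<in> {..<k}" "\<rho> i j = \<rho> i j'"
      then have "\<tau> (i + m * j) = \<tau> (i + m * j')" using dec[OF that] by simp
      then have "i + m * j = i + m * j'" using permutes_inj[OF tp] by (simp add: inj_eq)
      then show "j = j'" using m0 by simp
    qed
  qed (auto simp: \<rho>_def)
  have rB: "rename \<tau> (Bi i) = Bi (\<pi> i)" if "i < m" for i
  proof -
    have "rename \<tau> (Bi i) = subst (\<lambda>j. Var (\<tau> (i + m * j))) B"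
      by (simp add: rename_def Bi_def subst_subst)
    also have "\<dots> = subst (\<lambda>j. Var (\<pi> i + m * \<rho> i j)) B"
      by (rule subst_cong_in_vars[OF inB]) (simp add: dec that)
    also have "\<dots> = subst (\<lambda>j. Var (\<pi> i + m * j)) (rename (\<rho> i) B)"
      by (simp add: rename_def subst_subst)
    also have "\<dots> = Bi (\<pi> i)"
      using sB rp[OF that] by (simp add: symmetric_in_def Bi_def)
    finally show ?thesis .
  qed
  have "rename \<tau> F = subst (\<lambda>i. rename \<tau> (Bi i)) A"
    by (simp add: F_def Bi_def rename_def subst_subst)
  also have "\<dots> = subst (\<lambda>i. Bi (\<pi> i)) A"
    by (rule subst_cong_in_vars[OF inA]) (simp add: rB)
  also have "\<dots> = subst Bi (rename \<pi> A)"
    by (simp add: rename_def subst_subst)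
  finally have eq: "rename \<tau> F = subst Bi (rename \<pi> A)" .
  have F': "F = subst Bi A" unfolding F_def Bi_def by (rule refl)
  from sA pip have "rename \<pi> A = A \<or> rename \<pi> A = - A" by blast
  then show ?thesis using eq F' by (auto simp: subst_uminus)
qed




lemma neg_self_zero:
  fixes x :: mpoly
  assumes "x = - x" shows "x = 0"
proof -
  have "2 * x = 0" by (metis assms add.right_inverse mult_2)
  moreover have "(2::mpoly) \<noteq> 0" by simp
  ultimately show ?thesis by simp
qed

lemma prod_pm:
  assumes "\<forall>x\<in>A. f x \<in> {1, -1::mpoly}"
  shows "prod f A \<in> {1, -1}"
  using assms
proof (induction A rule: infinite_finite_induct)
  case (insert x F)
  then have "f x = 1 \<or> f x = -1" "prod f F = 1 \<or> prod f F = -1" by auto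
  then show ?case using insert(1,2) by (elim disjE) simp_all
qed simp_all

lemma image_perm_partition:
  assumes Q: "Q \<in> partitions_nm n m" and sp: "\<sigma> permutes {..<n}"
  shows "(`) \<sigma> ` Q \<in> partitions_nm n m"
proof -
  have inj: "inj \<sigma>" using sp by (rule permutes_inj)
  have po: "partition_on {..<n} Q" "card Q = m" "\<forall>P\<in>Q. card P = n div m"
    using Q by (auto simp: partitions_nm_def)
  have "partition_on (\<sigma> ` {..<n}) ((`) \<sigma> ` Q - {{}})"
    by (rule partition_on_inj_image[OF po(1)]) (use inj in \<open>auto intro: inj_on_subset\<close>)
  moreover have "\<sigma> ` {..<n} = {..<n}" using sp by (rule permutes_image)
  moreover have "(`) \<sigma> ` Q - {{}} = (`) \<sigma> ` Q" using partition_onD3[OF po(1)] by auto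
  ultimately have 1: "partition_on {..<n} ((`) \<sigma> ` Q)" by simp
  have "inj_on ((`) \<sigma>) Q" using inj by (simp add: inj_on_def inj_image_eq_iff)
  then have 2: "card ((`) \<sigma> ` Q) = m" using po(2) by (simp add: card_image)
  have 3: "\<forall>P\<in>(`) \<sigma> ` Q. card P = n div m"
    using po(3) inj by (auto simp: card_image inj_on_subset)
  show ?thesis using 1 2 3 by (simp add: partitions_nm_def)
qed

lemma hyp_from_blocks:
  assumes m0: "0 < m" and mn: "m dvd n" and tp: "\<tau> permutes {..<n}"
    and K: "\<And>i. i < m \<Longrightarrow> \<exists>i'<m. \<tau> ` block n m i = block n m i'"
    and x: "x < n" and y: "y < n"
  shows "x mod m = y mod m \<longleftrightarrow> \<tau> x mod m = \<tau> y mod m"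
proof -
  have inb: "z \<in> block n m (z mod m)" if "z < n" for z
    using block_eq[OF m0 mn, of "z mod m"] that m0 by simp
  have bm: "z mod m = i" if "z \<in> block n m i" "i < m" for z i
    using block_eq[OF m0 mn that(2)] that(1) by simp
  obtain i' where i': "i' < m" "\<tau> ` block n m (x mod m) = block n m i'" using K[of "x mod m"] m0 by auto
  obtain j' where j': "j' < m" "\<tau> ` block n m (y mod m) = block n m j'" using K[of "y mod m"] m0 by auto
  have tx: "\<tau> x mod m = i'" using inb[OF x] i' bm by blast
  have ty: "\<tau> y mod m = j'" using inb[OF y] j' bm by blast
  show ?thesis
  proof
    assume "x mod m = y mod m"
    then have "y \<in> block n m (x mod m)" using inb[OF y] by simp
    then have "\<tau> y \<in> block n m i'" using i'(2) by blast
    then show "\<tau> x mod m = \<tau> y mod m" using bm[OF _ i'(1)] tx by simp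
  next
    assume "\<tau> x mod m = \<tau> y mod m"
    then have "\<tau> ` block n m (x mod m) = \<tau> ` block n m (y mod m)" using i' j' tx ty by simp
    then have "block n m (x mod m) = block n m (y mod m)"
      using permutes_inj[OF tp] by (simp add: inj_image_eq_iff)
    then have "x \<in> block n m (y mod m)" using inb[OF x] by simp
    then show "x mod m = y mod m" using bm[of x "y mod m"] m0 by simp
  qed
qed




definition ev :: "nat \<Rightarrow> mpoly \<Rightarrow> mpoly" where
  "ev c p = subst (\<lambda>i. if i = c then Var 0 else 0) p"

lemma ev_rename: "ev c (rename \<tau> p) = subst (\<lambda>i. if \<tau> i = c then Var 0 else 0) p"
  unfolding ev_def rename_def subst_subst by simp

lemma rename_uminus: "rename \<tau> (- p) = - rename \<tau> p"
  by (simp add: rename_def subst_uminus)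

lemma ev_uminus: "ev c (- p) = - ev c p"
  by (simp add: ev_def subst_uminus)

locale setting =
  fixes n m :: nat and A B F :: mpoly and \<phi> :: "nat set set \<Rightarrow> nat \<Rightarrow> nat"
  assumes n3: "n \<ge> 3" and m0: "0 < m" and mn: "m dvd n"
    and inA: "in_vars m A"
    and sA: "\<forall>\<sigma>. \<sigma> permutes {..<m} \<longrightarrow> rename \<sigma> A = A \<or> rename \<sigma> A = - A"
    and inB: "in_vars (n div m) B" and sB: "symmetric_in (n div m) B"
    and tc: "transversal_choice n m \<phi>"
    and F_def: "F = subst (\<lambda>i. subst (\<lambda>j. Var (i + m * j)) B) A"
    and deg: "deg_var 0 (subst (\<lambda>i. if i = 0 then Var 0 else 0) F) > 0"
begin

lemma n0: "0 < n" using n3 by simp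

lemma wr:
  assumes "\<tau> permutes {..<n}"
    and "\<And>x y. x < n \<Longrightarrow> y < n \<Longrightarrow> (x mod m = y mod m \<longleftrightarrow> \<tau> x mod m = \<tau> y mod m)"
  shows "rename \<tau> F = F \<or> rename \<tau> F = - F"
  unfolding F_def
  by (rule wreath[OF n0 m0 mn refl inA sA inB sB assms])

lemma phiQ:
  assumes "Q \<in> partitions_nm n m"
  shows "\<phi> Q permutes {..<n}" "(\<lambda>i. \<phi> Q ` block n m i) ` {..<m} = Q"
  using tc assms by (auto simp: transversal_choice_def)

lemma main_step:
  assumes Q: "Q \<in> partitions_nm n m" and sp: "\<sigma> permutes {..<n}"
  shows "rename \<sigma> (rename (\<phi> Q) F) = rename (\<phi> ((`) \<sigma> ` Q)) F \<or>
         rename \<sigma> (rename (\<phi> Q) F) = - rename (\<phi> ((`) \<sigma> ` Q)) F"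
proof -
  define Q' where "Q' = (`) \<sigma> ` Q"
  have Q': "Q' \<in> partitions_nm n m" unfolding Q'_def using image_perm_partition Q sp by blast
  note p1 = phiQ[OF Q] and p2 = phiQ[OF Q']
  define \<tau> where "\<tau> = inv (\<phi> Q') \<circ> \<sigma> \<circ> \<phi> Q"
  have tp: "\<tau> permutes {..<n}" unfolding \<tau>_def
    by (intro permutes_compose permutes_inv p1(1) p2(1) sp)
  have K: "\<exists>i'<m. \<tau> ` block n m i = block n m i'" if "i < m" for i
  proof -
    have "\<phi> Q ` block n m i \<in> Q" using p1(2) that by blast
    then have "\<sigma> ` (\<phi> Q ` block n m i) \<in> Q'" by (simp add: Q'_def)
    then have "\<sigma> ` (\<phi> Q ` block n m i) \<in> (\<lambda>i. \<phi> Q' ` block n m i) ` {..<m}" using p2(2) by simp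
    then obtain i' where i'0: "i' \<in> {..<m}" and i'1: "\<sigma> ` (\<phi> Q ` block n m i) = \<phi> Q' ` block n m i'"
      by (rule imageE)
    have i': "i' < m" "\<sigma> ` (\<phi> Q ` block n m i) = \<phi> Q' ` block n m i'" using i'0 i'1 by auto
    have "\<tau> ` block n m i = inv (\<phi> Q') ` (\<sigma> ` (\<phi> Q ` block n m i))" by (simp only: \<tau>_def image_comp o_assoc)
    also have "\<dots> = inv (\<phi> Q') ` \<phi> Q' ` block n m i'" using i' by simp
    also have "\<dots> = block n m i'" by (simp add: image_image permutes_inverses(2)[OF p2(1)])
    finally show ?thesis using i' by blast
  qed
  have hyp: "x mod m = y mod m \<longleftrightarrow> \<tau> x mod m = \<tau> y mod m" if "x < n" "y < n" for x y
    by (rule hyp_from_blocks[OF m0 mn tp K that])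
  have w: "rename \<tau> F = F \<or> rename \<tau> F = - F" by (rule wr[OF tp hyp])
  have "\<sigma> \<circ> \<phi> Q = \<phi> Q' \<circ> \<tau>"
    by (simp add: fun_eq_iff \<tau>_def permutes_inverses(1)[OF p2(1)])
  then have "rename \<sigma> (rename (\<phi> Q) F) = rename (\<phi> Q') (rename \<tau> F)"
    by (simp add: rename_rename)
  then show ?thesis using w by (auto simp: Q'_def rename_uminus)
qed

lemma finPN: "finite (partitions_nm n m)"
proof (rule finite_subset)
  have "Q \<subseteq> Pow {..<n}" if "partition_on {..<n} Q" for Q
    using partition_onD1[OF that] by blast
  then show "partitions_nm n m \<subseteq> Pow (Pow {..<n})"
    unfolding partitions_nm_def by blast
qed simp

lemma injphi: "inj_on \<phi> (partitions_nm n m)"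
proof (rule inj_onI)
  fix Q1 Q2 assume q1: "Q1 \<in> partitions_nm n m" and q2: "Q2 \<in> partitions_nm n m" and e: "\<phi> Q1 = \<phi> Q2"
  have "Q1 = (\<lambda>i. \<phi> Q1 ` block n m i) ` {..<m}" using phiQ(2)[OF q1] by (rule sym)
  also have "\<dots> = (\<lambda>i. \<phi> Q2 ` block n m i) ` {..<m}" unfolding e ..
  also have "\<dots> = Q2" by (rule phiQ(2)[OF q2])
  finally show "Q1 = Q2" .
qed

lemma sym_pm:
  assumes sp: "\<sigma> permutes {..<n}"
  shows "rename \<sigma> (\<Prod>\<psi> \<in> \<phi> ` partitions_nm n m. rename \<psi> F) = (\<Prod>\<psi> \<in> \<phi> ` partitions_nm n m. rename \<psi> F) \<or>
         rename \<sigma> (\<Prod>\<psi> \<in> \<phi> ` partitions_nm n m. rename \<psi> F) = - (\<Prod>\<psi> \<in> \<phi> ` partitions_nm n m. rename \<psi> F)"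
proof -
  define PN where "PN = partitions_nm n m"
  define P where "P = (\<Prod>\<psi> \<in> \<phi> ` PN. rename \<psi> F)"
  have P_eq: "P = (\<Prod>Q\<in>PN. rename (\<phi> Q) F)"
    unfolding P_def PN_def by (simp add: prod.reindex[OF injphi])
  define g where "g Q = (`) \<sigma> ` Q" for Q
  have isp: "inv \<sigma> permutes {..<n}" using sp by (rule permutes_inv)
  have bk: "(`) (inv \<sigma>) ` ((`) \<sigma> ` Q) = Q" for Q :: "nat set set"
    by (simp add: image_image permutes_inverses(2)[OF sp])
  have fwd: "(`) \<sigma> ` ((`) (inv \<sigma>) ` Q) = Q" for Q :: "nat set set"
    by (simp add: image_image permutes_inverses(1)[OF sp])
  have bij: "bij_betw g PN PN"
  proof (rule bij_betw_byWitness[where f' = "\<lambda>Q. (`) (inv \<sigma>) ` Q"])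
    show "\<forall>a\<in>PN. (`) (inv \<sigma>) ` g a = a" by (simp add: g_def bk)
    show "\<forall>a'\<in>PN. g ((`) (inv \<sigma>) ` a') = a'" by (simp add: g_def fwd)
    show "g ` PN \<subseteq> PN" by (rule image_subsetI) (simp add: g_def PN_def image_perm_partition[OF _ sp])
    show "(\<lambda>Q. (`) (inv \<sigma>) ` Q) ` PN \<subseteq> PN" by (rule image_subsetI) (simp add: PN_def image_perm_partition[OF _ isp])
  qed
  define s where "s Q = (if rename \<sigma> (rename (\<phi> Q) F) = rename (\<phi> (g Q)) F then 1 else - 1 :: mpoly)" for Q
  have each: "rename \<sigma> (rename (\<phi> Q) F) = s Q * rename (\<phi> (g Q)) F" if "Q \<in> PN" for Q
  proof -
    have "rename \<sigma> (rename (\<phi> Q) F) = rename (\<phi> (g Q)) F \<or> rename \<sigma> (rename (\<phi> Q) F) = - rename (\<phi> (g Q)) F"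
      unfolding g_def by (rule main_step[OF that[unfolded PN_def] sp])
    then show ?thesis
    proof
      assume h: "rename \<sigma> (rename (\<phi> Q) F) = rename (\<phi> (g Q)) F"
      then have "s Q = 1" by (simp add: s_def)
      then show ?thesis using h by simp
    next
      assume h: "rename \<sigma> (rename (\<phi> Q) F) = - rename (\<phi> (g Q)) F"
      show ?thesis
      proof (cases "rename \<sigma> (rename (\<phi> Q) F) = rename (\<phi> (g Q)) F")
        case True then show ?thesis by (simp add: s_def)
      next
        case False then have "s Q = -1" by (simp add: s_def)
        then show ?thesis using h by simp
      qed
    qed
  qed
  have s01: "\<forall>Q\<in>PN. s Q \<in> {1, -1}" by (simp add: s_def)
  have "rename \<sigma> P = (\<Prod>Q\<in>PN. rename \<sigma> (rename (\<phi> Q) F))"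
    unfolding P_eq rename_def[of \<sigma>] by (rule subst_prod)
  also have "\<dots> = (\<Prod>Q\<in>PN. s Q * rename (\<phi> (g Q)) F)" by (rule prod.cong) (simp_all add: each)
  also have "\<dots> = prod s PN * (\<Prod>Q\<in>PN. rename (\<phi> (g Q)) F)" by (rule prod.distrib)
  also have "(\<Prod>Q\<in>PN. rename (\<phi> (g Q)) F) = P"
    unfolding P_eq by (rule prod.reindex_bij_betw[OF bij])
  finally have "rename \<sigma> P = prod s PN * P" .
  moreover have "prod s PN \<in> {1, -1}" by (rule prod_pm[OF s01])
  ultimately have "rename \<sigma> P = P \<or> rename \<sigma> P = - P" by (elim insertE) simp_all
  then show ?thesis unfolding P_def PN_def .
qed

lemma G_nz: "ev 0 F \<noteq> 0"
proof
  assume "ev 0 F = 0"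
  then have "deg_var 0 (subst (\<lambda>i. if i = 0 then Var 0 else 0) F) = 0"
    by (simp add: ev_def deg_var_def)
  with deg show False by simp
qed

lemma factor_nz:
  assumes Q: "Q \<in> partitions_nm n m"
  shows "ev 0 (rename (\<phi> Q) F) \<noteq> 0"
proof -
  note p1 = phiQ(1)[OF Q]
  define kk where "kk = inv (\<phi> Q) 0"
  have kk: "kk < n" using permutes_in_image[OF permutes_inv[OF p1], of 0] n0 by (simp add: kk_def)
  define k where "k = n div m"
  have nmk: "n = m * k" using mn by (simp add: k_def)
  have k0: "0 < k" using n0 nmk by (cases k) auto
  define i0 where "i0 = kk mod m"
  define j0 where "j0 = kk div m"
  have i0: "i0 < m" using m0 by (simp add: i0_def)
  have j0: "j0 < k" using kk nmk m0 by (simp add: j0_def div_less_iff_less_mult mult.commute)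
  define t1 where "t1 = Transposition.transpose 0 i0"
  define t2 where "t2 = Transposition.transpose 0 j0"
  have t1m: "t1 a < m" if "a < m" for a using that i0 m0 by (simp add: t1_def transpose_def)
  have t2k: "t2 b < k" if "b < k" for b using that j0 k0 by (simp add: t2_def transpose_def)
  have t1inj: "t1 a = t1 b \<Longrightarrow> a = b" for a b unfolding t1_def by (rule transpose_eq_imp_eq)
  have t2inj: "t2 a = t2 b \<Longrightarrow> a = b" for a b unfolding t2_def by (rule transpose_eq_imp_eq)
  define \<tau> where "\<tau> x = (if x < n then t1 (x mod m) + m * t2 (x div m) else x)" for x
  have xdiv: "x div m < k" if "x < n" for x using that nmk m0 by (simp add: div_less_iff_less_mult mult.commute)
  have tx: "\<tau> x < n \<and> \<tau> x mod m = t1 (x mod m) \<and> \<tau> x div m = t2 (x div m)" if "x < n" for x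
  proof -
    have a: "t1 (x mod m) < m" using t1m m0 by simp
    have b: "t2 (x div m) < k" using t2k xdiv[OF that] by simp
    have "\<tau> x = t1 (x mod m) + m * t2 (x div m)" using that by (simp add: \<tau>_def)
    moreover have "t1 (x mod m) + m * t2 (x div m) < n" using lt_aux[OF a b] nmk by simp
    moreover have "(t1 (x mod m) + m * t2 (x div m)) mod m = t1 (x mod m)" using a by simp
    moreover have "(t1 (x mod m) + m * t2 (x div m)) div m = t2 (x div m)" using a m0 by simp
    ultimately show ?thesis by simp
  qed
  have tp: "\<tau> permutes {..<n}"
  proof (rule endo_permutes)
    show "inj_on \<tau> {..<n}"
    proof (rule inj_onI)
      fix x y assume x: "x \<in> {..<n}" and y: "y \<in> {..<n}" and e: "\<tau> x = \<tau> y"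
      have "t1 (x mod m) = t1 (y mod m)" using tx[of x] tx[of y] x y e by simp
      then have 1: "x mod m = y mod m" by (rule t1inj)
      have "t2 (x div m) = t2 (y div m)" using tx[of x] tx[of y] x y e by simp
      then have 2: "x div m = y div m" by (rule t2inj)
      show "x = y" using 1 2 by (metis mod_mult_div_eq)
    qed
    show "\<tau> x \<in> {..<n}" if "x \<in> {..<n}" for x using tx[of x] that by simp
    show "\<tau> x = x" if "x \<notin> {..<n}" for x using that by (simp add: \<tau>_def)
  qed simp
  have hyp: "x mod m = y mod m \<longleftrightarrow> \<tau> x mod m = \<tau> y mod m" if "x < n" "y < n" for x y
  proof -
    have "\<tau> x mod m = t1 (x mod m)" "\<tau> y mod m = t1 (y mod m)" using tx[OF that(1)] tx[OF that(2)] by simp_all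
    then show ?thesis using t1inj by metis
  qed
  have t0: "\<tau> 0 = kk"
  proof -
    have "\<tau> 0 = t1 0 + m * t2 0" using n0 by (simp add: \<tau>_def)
    also have "\<dots> = i0 + m * j0" by (simp add: t1_def t2_def)
    also have "\<dots> = kk" unfolding i0_def j0_def by (rule mod_mult_div_eq)
    finally show ?thesis .
  qed
  have w: "rename \<tau> F = F \<or> rename \<tau> F = - F" by (rule wr[OF tp hyp])
  have fe: "(\<lambda>i. if \<phi> Q (\<tau> i) = 0 then Var 0 else 0) = (\<lambda>i. if i = 0 then Var 0 else (0::mpoly))"
  proof
    fix i
    have "\<phi> Q (\<tau> i) = 0 \<longleftrightarrow> kk = \<tau> i" unfolding kk_def by (rule permutes_inv_eq[OF p1, symmetric])
    also have "\<dots> \<longleftrightarrow> \<tau> 0 = \<tau> i" using t0 by simp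
    also have "\<dots> \<longleftrightarrow> 0 = i" using permutes_inj[OF tp] by (rule inj_eq)
    finally show "(if \<phi> Q (\<tau> i) = 0 then Var 0 else 0) = (if i = 0 then Var 0 else (0::mpoly))" by auto
  qed
  have e: "ev 0 (rename (\<phi> Q) (rename \<tau> F)) = ev 0 F"
  proof -
    have "ev 0 (rename (\<phi> Q) (rename \<tau> F)) = subst (\<lambda>i. if \<phi> Q (\<tau> i) = 0 then Var 0 else 0) F"
      unfolding rename_rename ev_rename by simp
    also have "\<dots> = ev 0 F" unfolding fe ev_def ..
    finally show ?thesis .
  qed
  from w show ?thesis
  proof
    assume "rename \<tau> F = F" then show ?thesis using e G_nz by simp
  next
    assume "rename \<tau> F = - F"
    then have "- ev 0 (rename (\<phi> Q) F) = ev 0 F" using e by (simp add: rename_uminus ev_uminus)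
    then show ?thesis using G_nz by auto
  qed
qed

lemma ev0P: "ev 0 (\<Prod>\<psi> \<in> \<phi> ` partitions_nm n m. rename \<psi> F) \<noteq> 0"
proof -
  have "ev 0 (\<Prod>\<psi> \<in> \<phi> ` partitions_nm n m. rename \<psi> F) = (\<Prod>\<psi> \<in> \<phi> ` partitions_nm n m. ev 0 (rename \<psi> F))"
    unfolding ev_def by (rule subst_prod)
  moreover have "finite (\<phi> ` partitions_nm n m)" using finPN by simp
  moreover have "\<forall>\<psi>\<in>\<phi> ` partitions_nm n m. ev 0 (rename \<psi> F) \<noteq> 0" using factor_nz by blast
  ultimately show ?thesis by (simp add: prod_zero_iff)
qed

lemma evcP:
  assumes c: "c < n"
  shows "ev c (\<Prod>\<psi> \<in> \<phi> ` partitions_nm n m. rename \<psi> F) \<noteq> 0"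
proof -
  define P where "P = (\<Prod>\<psi> \<in> \<phi> ` partitions_nm n m. rename \<psi> F)"
  have tp: "Transposition.transpose 0 c permutes {..<n}" using c n0 by (intro permutes_swap_id) auto
  have fe: "(\<lambda>i. if Transposition.transpose 0 c i = 0 then Var 0 else 0) = (\<lambda>i. if i = c then Var 0 else (0::mpoly))"
    by (rule ext) (auto simp: transpose_def)
  have "ev 0 (rename (Transposition.transpose 0 c) P) = subst (\<lambda>i. if Transposition.transpose 0 c i = 0 then Var 0 else 0) P"
    by (rule ev_rename)
  also have "\<dots> = ev c P" unfolding fe ev_def ..
  finally have "ev 0 (rename (Transposition.transpose 0 c) P) = ev c P" .
  moreover have "rename (Transposition.transpose 0 c) P = P \<or> rename (Transposition.transpose 0 c) P = - P"
    unfolding P_def by (rule sym_pm[OF tp])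
  moreover have "ev 0 P \<noteq> 0" unfolding P_def by (rule ev0P)
  ultimately have "ev c P \<noteq> 0" by (auto simp: ev_uminus)
  then show ?thesis unfolding P_def .
qed

lemma fixP:
  assumes tp: "\<tau> permutes {..<n}" and c: "c < n" and tc: "\<tau> c = c"
  shows "rename \<tau> (\<Prod>\<psi> \<in> \<phi> ` partitions_nm n m. rename \<psi> F) = (\<Prod>\<psi> \<in> \<phi> ` partitions_nm n m. rename \<psi> F)"
proof (rule ccontr)
  define P where "P = (\<Prod>\<psi> \<in> \<phi> ` partitions_nm n m. rename \<psi> F)"
  assume "rename \<tau> (\<Prod>\<psi> \<in> \<phi> ` partitions_nm n m. rename \<psi> F) \<noteq> (\<Prod>\<psi> \<in> \<phi> ` partitions_nm n m. rename \<psi> F)"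
  then have "rename \<tau> P \<noteq> P" unfolding P_def .
  moreover have "rename \<tau> P = P \<or> rename \<tau> P = - P" unfolding P_def by (rule sym_pm[OF tp])
  ultimately have r: "rename \<tau> P = - P" by simp
  have fe: "(\<lambda>i. if \<tau> i = c then Var 0 else 0) = (\<lambda>i. if i = c then Var 0 else (0::mpoly))"
  proof (rule ext)
    fix i
    have "\<tau> i = c \<longleftrightarrow> \<tau> i = \<tau> c" using tc by simp
    also have "\<dots> \<longleftrightarrow> i = c" using permutes_inj[OF tp] by (rule inj_eq)
    finally show "(if \<tau> i = c then Var 0 else 0) = (if i = c then Var 0 else (0::mpoly))" by simp
  qed
  have "ev c (rename \<tau> P) = subst (\<lambda>i. if \<tau> i = c then Var 0 else 0) P" by (rule ev_rename)
  also have "\<dots> = ev c P" unfolding fe ev_def ..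
  finally have "ev c (rename \<tau> P) = ev c P" .
  then have "ev c P = - ev c P" using r by (simp add: ev_uminus)
  then have "ev c P = 0" by (rule neg_self_zero)
  moreover have "ev c P \<noteq> 0" unfolding P_def by (rule evcP[OF c])
  ultimately show False by simp
qed

lemma symP: "symmetric_in n (\<Prod>\<psi> \<in> \<phi> ` partitions_nm n m. rename \<psi> F)"
  unfolding symmetric_in_def
proof (intro allI impI)
  fix \<sigma> :: "nat \<Rightarrow> nat" assume sp: "\<sigma> permutes {..<n}"
  show "rename \<sigma> (\<Prod>\<psi> \<in> \<phi> ` partitions_nm n m. rename \<psi> F) = (\<Prod>\<psi> \<in> \<phi> ` partitions_nm n m. rename \<psi> F)"
    using sp finite_lessThan
  proof (induction \<sigma> rule: permutes_induct)
    case id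
    show ?case by (rule fixP[of id 0]) (use n0 in \<open>auto simp: permutes_id\<close>)
  next
    case (swap a b p)
    obtain c where c: "c < 3" "c \<noteq> a" "c \<noteq> b"
    proof -
      have "\<exists>c::nat. c < 3 \<and> c \<noteq> a \<and> c \<noteq> b" by presburger
      then show ?thesis using that by blast
    qed
    have tp: "Transposition.transpose a b permutes {..<n}" using swap by (intro permutes_swap_id) auto
    have "rename (Transposition.transpose a b \<circ> p) (\<Prod>\<psi> \<in> \<phi> ` partitions_nm n m. rename \<psi> F)
        = rename (Transposition.transpose a b) (rename p (\<Prod>\<psi> \<in> \<phi> ` partitions_nm n m. rename \<psi> F))"
      by (simp add: rename_rename)
    also have "\<dots> = rename (Transposition.transpose a b) (\<Prod>\<psi> \<in> \<phi> ` partitions_nm n m. rename \<psi> F)"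
      using swap.IH by simp
    also have "\<dots> = (\<Prod>\<psi> \<in> \<phi> ` partitions_nm n m. rename \<psi> F)"
      by (rule fixP[OF tp, of c]) (use c n3 in \<open>auto simp: transpose_def\<close>)
    finally show ?case .
  qed
qed

end

theorem lemma5p2:
  fixes n m :: nat and A B :: mpoly and \<phi> :: "nat set set \<Rightarrow> nat \<Rightarrow> nat"
  assumes "m dvd n" and "n \<ge> 3"
    and "in_vars m A"
    and "\<forall>\<sigma>. \<sigma> permutes {..<m} \<longrightarrow> rename \<sigma> A = A \<or> rename \<sigma> A = - A"
    and "in_vars (n div m) B" and "symmetric_in (n div m) B"
    and "transversal_choice n m \<phi>"
  defines "F \<equiv> subst (\<lambda>i. subst (\<lambda>j. Var (i + m * j)) B) A"
  assumes "deg_var 0 (subst (\<lambda>i. if i = 0 then Var 0 else 0) F) > 0"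
  shows "symmetric_in n (\<Prod>\<psi> \<in> \<phi> ` partitions_nm n m. rename \<psi> F)"
proof -
  have m0: "0 < m" using assms(1,2) by (cases m) auto
  interpret setting n m A B F \<phi>
    by (unfold_locales) (use assms m0 in \<open>simp_all add: F_def\<close>)
  show ?thesis by (rule symP)
qed


end
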